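(* Let $p:\tilde{Q}\to Q$ be a covering of finite quandles, and let $\Lambda$ be a subgroup of the deck transformation group $\mathrm{Aut}(p)$ that acts freely and transitively on each fiber $p^{-1}(q)$, $q\in Q$. Then there is a function $\phi:Q\times Q\to\Lambda$ such that $\Lambda\times_\phi Q$ is a quandle isomorphic to $\tilde{Q}$.
   Context: A quandle is a set with operation $*$ satisfying $a*a=a$; unique right division; $(a*b)*c=(a*c)*(b*c)$. $R_a(y)=y*a$. A covering is a quandle epimorphism $p:\tilde Q\to Q$ such that $p(y_1)=p(y_2)$ implies $R_{y_1}=R_{y_2}$. Its deck transformation group $\mathrm{Aut}(p)$ is the group of quandle automorphisms $\lambda$ of $\tilde{Q}$ with $p\circ\lambda=p$. For a (not necessarily abelian) group $\Lambda$ and a function $\phi:Q\times Q\to\Lambda$, $\Lambda\times_\phi Q$ denotes the set $\Lambda\times Q$ with $(\lambda,a)*(\mu,b)=(\lambda\phi(a,b),a*b)$. *)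

theory Defs
  imports "HOL-Library.FuncSet"
begin

definition quandle :: "'a set \<Rightarrow> ('a \<Rightarrow> 'a \<Rightarrow> 'a) \<Rightarrow> bool" where
  "quandle X op \<longleftrightarrow>
     (\<forall>a\<in>X. \<forall>b\<in>X. op a b \<in> X) \<and>
     (\<forall>a\<in>X. op a a = a) \<and>
     (\<forall>a\<in>X. \<forall>b\<in>X. \<exists>!c. c \<in> X \<and> op c b = a) \<and>
     (\<forall>a\<in>X. \<forall>b\<in>X. \<forall>c\<in>X. op (op a b) c = op (op a c) (op b c))"

definition quandle_hom :: "'a set \<Rightarrow> ('a \<Rightarrow> 'a \<Rightarrow> 'a) \<Rightarrow> 'b set \<Rightarrow> ('b \<Rightarrow> 'b \<Rightarrow> 'b) \<Rightarrow> ('a \<Rightarrow> 'b) \<Rightarrow> bool" where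
  "quandle_hom X opX Y opY f \<longleftrightarrow>
     f \<in> X \<rightarrow> Y \<and> (\<forall>a\<in>X. \<forall>b\<in>X. f (opX a b) = opY (f a) (f b))"

definition quandle_iso :: "'a set \<Rightarrow> ('a \<Rightarrow> 'a \<Rightarrow> 'a) \<Rightarrow> 'b set \<Rightarrow> ('b \<Rightarrow> 'b \<Rightarrow> 'b) \<Rightarrow> ('a \<Rightarrow> 'b) \<Rightarrow> bool" where
  "quandle_iso X opX Y opY f \<longleftrightarrow> quandle_hom X opX Y opY f \<and> bij_betw f X Y"

definition quandle_covering :: "'a set \<Rightarrow> ('a \<Rightarrow> 'a \<Rightarrow> 'a) \<Rightarrow> 'b set \<Rightarrow> ('b \<Rightarrow> 'b \<Rightarrow> 'b) \<Rightarrow> ('a \<Rightarrow> 'b) \<Rightarrow> bool" where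
  "quandle_covering QT opT Q opQ p \<longleftrightarrow>
     quandle QT opT \<and> quandle Q opQ \<and>
     quandle_hom QT opT Q opQ p \<and> p ` QT = Q \<and>
     (\<forall>y1\<in>QT. \<forall>y2\<in>QT. p y1 = p y2 \<longrightarrow> (\<forall>x\<in>QT. opT x y1 = opT x y2))"

text \<open>Deck transformation group Aut(p): quandle automorphisms l of QT with p \<circ> l = p.
  Elements are represented as extensional functions on QT (so that equality of
  group elements is equality of maps on QT); the group operation is composition.\<close>
definition deck_group :: "'a set \<Rightarrow> ('a \<Rightarrow> 'a \<Rightarrow> 'a) \<Rightarrow> ('a \<Rightarrow> 'b) \<Rightarrow> ('a \<Rightarrow> 'a) set" where
  "deck_group QT opT p =
     {l. l \<in> extensional QT \<and> quandle_iso QT opT QT opT l \<and> (\<forall>y\<in>QT. p (l y) = p y)}"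

definition deck_mult :: "'a set \<Rightarrow> ('a \<Rightarrow> 'a) \<Rightarrow> ('a \<Rightarrow> 'a) \<Rightarrow> ('a \<Rightarrow> 'a)" where
  "deck_mult QT l m = compose QT l m"

definition deck_one :: "'a set \<Rightarrow> ('a \<Rightarrow> 'a)" where
  "deck_one QT = restrict id QT"

definition deck_inv :: "'a set \<Rightarrow> ('a \<Rightarrow> 'a) \<Rightarrow> ('a \<Rightarrow> 'a)" where
  "deck_inv QT l = restrict (inv_into QT l) QT"

definition deck_subgroup :: "'a set \<Rightarrow> ('a \<Rightarrow> 'a \<Rightarrow> 'a) \<Rightarrow> ('a \<Rightarrow> 'b) \<Rightarrow> ('a \<Rightarrow> 'a) set \<Rightarrow> bool" where
  "deck_subgroup QT opT p L \<longleftrightarrow>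
     L \<subseteq> deck_group QT opT p \<and> deck_one QT \<in> L \<and>
     (\<forall>l\<in>L. \<forall>m\<in>L. deck_mult QT l m \<in> L) \<and>
     (\<forall>l\<in>L. deck_inv QT l \<in> L)"

definition acts_freely_transitively_on_fibers ::
  "'a set \<Rightarrow> ('a \<Rightarrow> 'b) \<Rightarrow> 'b set \<Rightarrow> ('a \<Rightarrow> 'a) set \<Rightarrow> bool" where
  "acts_freely_transitively_on_fibers QT p Q L \<longleftrightarrow>
     (\<forall>q\<in>Q. \<forall>y1\<in>QT. \<forall>y2\<in>QT. p y1 = q \<longrightarrow> p y2 = q \<longrightarrow> (\<exists>!l. l \<in> L \<and> l y1 = y2))"

definition ext_op :: "'a set \<Rightarrow> ('b \<Rightarrow> 'b \<Rightarrow> 'b) \<Rightarrow> ('b \<Rightarrow> 'b \<Rightarrow> ('a \<Rightarrow> 'a))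
     \<Rightarrow> (('a \<Rightarrow> 'a) \<times> 'b) \<Rightarrow> (('a \<Rightarrow> 'a) \<times> 'b) \<Rightarrow> (('a \<Rightarrow> 'a) \<times> 'b)" where
  "ext_op QT opQ phi x y = (deck_mult QT (fst x) (phi (snd x) (snd y)), opQ (snd x) (snd y))"

end

theory Submission
  imports Defs
begin

lemma quandle_transfer:
  assumes Q: "quandle Y opY" and iso: "quandle_iso X opX Y opY f"
    and cl: "\<forall>a\<in>X. \<forall>b\<in>X. opX a b \<in> X"
  shows "quandle X opX"
proof -
  have hom: "\<And>a b. a\<in>X \<Longrightarrow> b\<in>X \<Longrightarrow> f (opX a b) = opY (f a) (f b)"
    and fX: "\<And>a. a\<in>X \<Longrightarrow> f a \<in> Y"
    using iso unfolding quandle_iso_def quandle_hom_def by auto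
  have inj: "inj_on f X" and bij: "bij_betw f X Y" using iso unfolding quandle_iso_def bij_betw_def by auto
  have Yc: "\<forall>a\<in>Y. \<forall>b\<in>Y. opY a b \<in> Y" and Yi: "\<forall>a\<in>Y. opY a a = a"
    and Yd: "\<forall>a\<in>Y. \<forall>b\<in>Y. \<exists>!c. c \<in> Y \<and> opY c b = a"
    and Ys: "\<forall>a\<in>Y. \<forall>b\<in>Y. \<forall>c\<in>Y. opY (opY a b) c = opY (opY a c) (opY b c)"
    using Q unfolding quandle_def by blast+
  have idem: "\<forall>a\<in>X. opX a a = a"
  proof
    fix a assume a: "a \<in> X"
    have "f (opX a a) = f a" using hom[OF a a] Yi fX[OF a] by simp
    moreover have "opX a a \<in> X" using cl a by blast
    ultimately show "opX a a = a" using inj_onD[OF inj] a by blast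
  qed
  have div: "\<forall>a\<in>X. \<forall>b\<in>X. \<exists>!c. c \<in> X \<and> opX c b = a"
  proof (intro ballI)
    fix a b assume a: "a \<in> X" and b: "b \<in> X"
    obtain c' where c': "c' \<in> Y" "opY c' (f b) = f a" using Yd fX a b by blast
    obtain c where c: "c \<in> X" "f c = c'" using bij c'(1) unfolding bij_betw_def by auto
    have "f (opX c b) = f a" using hom[OF c(1) b] c c' by simp
    moreover have "opX c b \<in> X" using cl c(1) b by blast
    ultimately have e: "opX c b = a" using inj_onD[OF inj] a by blast
    show "\<exists>!c. c \<in> X \<and> opX c b = a"
    proof (rule ex1I[of _ c])
      show "c \<in> X \<and> opX c b = a" using c e by auto
    next
      fix d assume d: "d \<in> X \<and> opX d b = a"
      have "opY (f d) (f b) = f a" using hom[of d b] d b by simp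
      moreover have "f d \<in> Y" using fX d by simp
      moreover have "\<exists>!c. c \<in> Y \<and> opY c (f b) = f a" using Yd fX a b by simp
      ultimately have "f d = c'" using c' by blast
      thus "d = c" using c d inj_onD[OF inj] by auto
    qed
  qed
  have dist: "\<forall>a\<in>X. \<forall>b\<in>X. \<forall>c\<in>X. opX (opX a b) c = opX (opX a c) (opX b c)"
  proof (intro ballI)
    fix a b c assume a: "a \<in> X" and b: "b \<in> X" and c: "c \<in> X"
    have ab: "opX a b \<in> X" and ac: "opX a c \<in> X" and bc: "opX b c \<in> X" using cl a b c by blast+
    have "f (opX (opX a b) c) = opY (opY (f a) (f b)) (f c)" using hom[OF ab c] hom[OF a b] by simp
    also have "\<dots> = opY (opY (f a) (f c)) (opY (f b) (f c))" using Ys fX a b c by blast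
    also have "\<dots> = f (opX (opX a c) (opX b c))" using hom[OF ac bc] hom[OF a c] hom[OF b c] by simp
    finally have "f (opX (opX a b) c) = f (opX (opX a c) (opX b c))" .
    moreover have "opX (opX a b) c \<in> X" "opX (opX a c) (opX b c) \<in> X" using cl ab ac bc c by blast+
    ultimately show "opX (opX a b) c = opX (opX a c) (opX b c)" using inj_onD[OF inj] by blast
  qed
  show ?thesis unfolding quandle_def using cl idem div dist by blast
qed

theorem mainTheorem10:
  fixes QT :: "'a set" and opT :: "'a \<Rightarrow> 'a \<Rightarrow> 'a"
    and Q :: "'b set" and opQ :: "'b \<Rightarrow> 'b \<Rightarrow> 'b"
    and p :: "'a \<Rightarrow> 'b" and L :: "('a \<Rightarrow> 'a) set"
  assumes "finite QT" and "finite Q"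
    and "quandle_covering QT opT Q opQ p"
    and "deck_subgroup QT opT p L"
    and "acts_freely_transitively_on_fibers QT p Q L"
  shows "\<exists>phi. (\<forall>a\<in>Q. \<forall>b\<in>Q. phi a b \<in> L) \<and>
           quandle (L \<times> Q) (ext_op QT opQ phi) \<and>
           (\<exists>f. quandle_iso (L \<times> Q) (ext_op QT opQ phi) QT opT f)"
proof -
  have C: "quandle QT opT \<and> quandle Q opQ \<and> quandle_hom QT opT Q opQ p \<and> p ` QT = Q \<and>
     (\<forall>y1\<in>QT. \<forall>y2\<in>QT. p y1 = p y2 \<longrightarrow> (\<forall>x\<in>QT. opT x y1 = opT x y2))"
    using assms(3) unfolding quandle_covering_def .
  have qT: "quandle QT opT" and qQ: "quandle Q opQ" and hp: "quandle_hom QT opT Q opQ p"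
    and psurj: "p ` QT = Q" and cov0: "\<forall>y1\<in>QT. \<forall>y2\<in>QT. p y1 = p y2 \<longrightarrow> (\<forall>x\<in>QT. opT x y1 = opT x y2)"
    using C by blast+
  have pQ: "\<And>y. y \<in> QT \<Longrightarrow> p y \<in> Q" using psurj by blast
  have phom: "\<And>a b. a\<in>QT \<Longrightarrow> b\<in>QT \<Longrightarrow> p (opT a b) = opQ (p a) (p b)"
    using hp unfolding quandle_hom_def by blast
  have cov: "\<And>y1 y2 x. y1\<in>QT \<Longrightarrow> y2\<in>QT \<Longrightarrow> p y1 = p y2 \<Longrightarrow> x\<in>QT \<Longrightarrow> opT x y1 = opT x y2"
    using cov0 by blast
  have Tc: "\<And>a b. a\<in>QT \<Longrightarrow> b\<in>QT \<Longrightarrow> opT a b \<in> QT" using qT unfolding quandle_def by blast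
  have Qc: "\<And>a b. a\<in>Q \<Longrightarrow> b\<in>Q \<Longrightarrow> opQ a b \<in> Q" using qQ unfolding quandle_def by blast
  have LS: "L \<subseteq> deck_group QT opT p \<and> deck_one QT \<in> L \<and>
     (\<forall>l\<in>L. \<forall>m\<in>L. deck_mult QT l m \<in> L) \<and> (\<forall>l\<in>L. deck_inv QT l \<in> L)"
    using assms(4) unfolding deck_subgroup_def .
  have LD0: "\<And>l. l \<in> L \<Longrightarrow> l \<in> extensional QT \<and> quandle_iso QT opT QT opT l \<and> (\<forall>y\<in>QT. p (l y) = p y)"
  proof -
    fix l assume "l \<in> L"
    hence "l \<in> deck_group QT opT p" using LS by blast
    thus "l \<in> extensional QT \<and> quandle_iso QT opT QT opT l \<and> (\<forall>y\<in>QT. p (l y) = p y)"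
      unfolding deck_group_def by simp
  qed
  have LH: "\<And>l. l \<in> L \<Longrightarrow> l \<in> QT \<rightarrow> QT \<and> (\<forall>a\<in>QT. \<forall>b\<in>QT. l (opT a b) = opT (l a) (l b))"
  proof -
    fix l assume "l \<in> L"
    hence "quandle_hom QT opT QT opT l" using LD0 unfolding quandle_iso_def by blast
    thus "l \<in> QT \<rightarrow> QT \<and> (\<forall>a\<in>QT. \<forall>b\<in>QT. l (opT a b) = opT (l a) (l b))" unfolding quandle_hom_def .
  qed
  have Lmap: "\<And>l y. l \<in> L \<Longrightarrow> y \<in> QT \<Longrightarrow> l y \<in> QT" using LH by blast
  have Lhom: "\<And>l a b. l \<in> L \<Longrightarrow> a\<in>QT \<Longrightarrow> b\<in>QT \<Longrightarrow> l (opT a b) = opT (l a) (l b)" using LH by blast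
  have Lp: "\<And>l y. l \<in> L \<Longrightarrow> y \<in> QT \<Longrightarrow> p (l y) = p y" using LD0 by blast
  have Lmult: "\<And>l m. l \<in> L \<Longrightarrow> m \<in> L \<Longrightarrow> deck_mult QT l m \<in> L"
    using LS by blast
  have act: "\<And>y1 y2. y1\<in>QT \<Longrightarrow> y2\<in>QT \<Longrightarrow> p y1 = p y2 \<Longrightarrow> \<exists>!l. l \<in> L \<and> l y1 = y2"
  proof -
    fix y1 y2 assume a: "y1\<in>QT" "y2\<in>QT" "p y1 = p y2"
    have py: "p y1 \<in> Q" using pQ a by simp
    have H: "\<forall>q\<in>Q. \<forall>y1\<in>QT. \<forall>y2\<in>QT. p y1 = q \<longrightarrow> p y2 = q \<longrightarrow> (\<exists>!l. l \<in> L \<and> l y1 = y2)"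
      using assms(5) unfolding acts_freely_transitively_on_fibers_def .
    have "\<forall>z1\<in>QT. \<forall>z2\<in>QT. p z1 = p y1 \<longrightarrow> p z2 = p y1 \<longrightarrow> (\<exists>!l. l \<in> L \<and> l z1 = z2)"
      by (rule bspec[OF H py])
    hence "p y1 = p y1 \<longrightarrow> p y2 = p y1 \<longrightarrow> (\<exists>!l. l \<in> L \<and> l y1 = y2)" using a(1,2) by blast
    thus "\<exists>!l. l \<in> L \<and> l y1 = y2" using a by simp
  qed
  define s where "s = (\<lambda>q. SOME y. y \<in> QT \<and> p y = q)"
  have s: "\<And>q. q \<in> Q \<Longrightarrow> s q \<in> QT \<and> p (s q) = q"
  proof -
    fix q assume "q \<in> Q"
    then obtain y where "y \<in> QT" "p y = q" using psurj by blast
    hence "y \<in> QT \<and> p y = q" by simp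
    thus "s q \<in> QT \<and> p (s q) = q" unfolding s_def by (rule someI)
  qed
  define phi where "phi = (\<lambda>a b. THE l. l \<in> L \<and> l (s (opQ a b)) = opT (s a) (s b))"
  have phi: "\<And>a b. a\<in>Q \<Longrightarrow> b\<in>Q \<Longrightarrow> phi a b \<in> L \<and> phi a b (s (opQ a b)) = opT (s a) (s b)"
  proof -
    fix a b assume a: "a\<in>Q" and b: "b\<in>Q"
    have "\<exists>!l. l \<in> L \<and> l (s (opQ a b)) = opT (s a) (s b)"
      using act[of "s (opQ a b)" "opT (s a) (s b)"] s a b Qc Tc phom by simp
    thus "phi a b \<in> L \<and> phi a b (s (opQ a b)) = opT (s a) (s b)"
      unfolding phi_def by (rule theI')
  qed
  define f :: "(('a \<Rightarrow> 'a) \<times> 'b) \<Rightarrow> 'a" where "f = (\<lambda>x. fst x (s (snd x)))"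
  have cl: "\<forall>x\<in>L \<times> Q. \<forall>y\<in>L \<times> Q. ext_op QT opQ phi x y \<in> L \<times> Q"
    using phi Lmult Qc unfolding ext_op_def by auto
  have fhom: "quandle_hom (L \<times> Q) (ext_op QT opQ phi) QT opT f"
    unfolding quandle_hom_def
  proof (intro conjI ballI)
    show "f \<in> L \<times> Q \<rightarrow> QT" unfolding f_def using s Lmap by auto
  next
    fix x y assume x: "x \<in> L \<times> Q" and y: "y \<in> L \<times> Q"
    obtain l a where xa: "x = (l,a)" "l \<in> L" "a \<in> Q" using x by auto
    obtain m b where yb: "y = (m,b)" "m \<in> L" "b \<in> Q" using y by auto
    have "f (ext_op QT opQ phi x y) = l (phi a b (s (opQ a b)))"
      unfolding f_def ext_op_def deck_mult_def compose_def using xa yb s Qc by simp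
    also have "\<dots> = l (opT (s a) (s b))" using phi xa yb by simp
    also have "\<dots> = opT (l (s a)) (l (s b))" using Lhom xa yb s by simp
    also have "\<dots> = opT (l (s a)) (m (s b))"
      using cov[of "l (s b)" "m (s b)" "l (s a)"] Lmap Lp xa yb s by simp
    finally show "f (ext_op QT opQ phi x y) = opT (f x) (f y)" unfolding f_def using xa yb by simp
  qed
  have fbij: "bij_betw f (L \<times> Q) QT"
    unfolding bij_betw_def
  proof
    show "inj_on f (L \<times> Q)"
    proof (rule inj_onI)
      fix x y assume x: "x \<in> L \<times> Q" and y: "y \<in> L \<times> Q" and e: "f x = f y"
      obtain l a where xa: "x = (l,a)" "l \<in> L" "a \<in> Q" using x by auto
      obtain m b where yb: "y = (m,b)" "m \<in> L" "b \<in> Q" using y by auto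
      have e': "l (s a) = m (s b)" using e xa yb unfolding f_def by simp
      have sa: "s a \<in> QT" "p (s a) = a" using s xa by auto
      have sb: "s b \<in> QT" "p (s b) = b" using s yb by auto
      have "a = p (l (s a))" using Lp[OF xa(2) sa(1)] sa by simp
      also have "\<dots> = p (m (s b))" using e' by simp
      also have "\<dots> = b" using Lp[OF yb(2) sb(1)] sb by simp
      finally have ab: "a = b" .
      have "\<exists>!k. k \<in> L \<and> k (s a) = l (s a)" using act[of "s a" "l (s a)"] sa Lmap Lp xa by simp
      moreover have "m (s a) = l (s a)" using e' ab by simp
      ultimately have "l = m" using xa yb by blast
      note ab this
      then show "x = y" using xa yb by simp
    qed
  next
    show "f ` (L \<times> Q) = QT"
    proof
      show "f ` (L \<times> Q) \<subseteq> QT" using fhom unfolding quandle_hom_def by auto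
    next
      show "QT \<subseteq> f ` (L \<times> Q)"
      proof
        fix y assume y: "y \<in> QT"
        let ?a = "p y"
        have a: "?a \<in> Q" using pQ y by simp
        have sa: "s ?a \<in> QT" "p (s ?a) = ?a" using s a by auto
        have "\<exists>!l. l \<in> L \<and> l (s ?a) = y" using act[OF sa(1) y] sa by simp
        then obtain l where l: "l \<in> L" "l (s ?a) = y" by blast
        have "f (l, ?a) = y" unfolding f_def using l by simp
        thus "y \<in> f ` (L \<times> Q)" using l a by force
      qed
    qed
  qed
  have iso: "quandle_iso (L \<times> Q) (ext_op QT opQ phi) QT opT f"
    unfolding quandle_iso_def using fhom fbij by simp
  show ?thesis
    using phi quandle_transfer[OF qT iso cl] iso by blast
qed

end
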